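(* Let $\|\cdot\|$ be a norm on $\mathbb{R}^2$. For every $\phi\in\mathsf{D}_0$ and every $\psi\in\big(\pi_{\Omega^\circ},\,2\pi_{\Omega^\circ}-\delta_-(\phi)\big)$ with $\phi+\psi\in\mathsf{D}_0$, one has $\mathcal{J}_R(\phi,\psi)>0$. In particular, if the norm is $C^1$, then $\mathcal{J}_R(\phi,\psi)>0$ for all $\phi\in\mathsf{D}_0$ and $\psi\in(\pi_{\Omega^\circ},2\pi_{\Omega^\circ})$ with $\phi+\psi\in\mathsf{D}_0$.
   Context: Regularity of the norm: the norm is called $C^1$ if it is of class $C^1$ on $\mathbb{R}^2\setminus\{0\}$. Convex trigonometry: let $\Omega=\{x:\|x\|\le1\}$ and $\Omega^\circ=\{p:\langle p,x\rangle\le1\ \forall x\in\Omega\}$ (the closed unit ball of the dual norm). For a compact convex $S\subset\mathbb{R}^2$ with $0$ in its interior, let $\pi_S$ be the area of $S$; for $\theta\in[0,2\pi_S)$ let $P^S_\theta\in\partial S$ be the point such that the region of $S$ swept counterclockwise from the ray through $(1,0)$ to the ray through $P^S_\theta$ has area $\theta/2$; extend $2\pi_S$-periodically and write $P^S_\theta=(\cos_S\theta,\sin_S\theta)$. Angles $\theta$ and $\phi$ correspond if $\cos_\Omega(\theta)\cos_{\Omega^\circ}(\phi)+\sin_\Omega(\theta)\sin_{\Omega^\circ}(\phi)=1$. $C_\circ$ is the nondecreasing (possibly multivalued) map on $\mathbb{R}$ assigning to $\phi$ the maximal closed interval of angles $\theta$ corresponding to $\phi$, normalized so that $C_\circ(\phi+2k\pi_{\Omega^\circ})=C_\circ(\phi)+2k\pi_\Omega$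 for $k\in\mathbb{Z}$; $C^\circ$ is defined symmetrically, and $\delta_\pm(\phi)\ge0$ are defined by $C^\circ(C_\circ(\phi))=[\phi-\delta_-(\phi),\phi+\delta_+(\phi)]$. $\mathsf{D}_0$ is the set of angles where $C_\circ$ is single-valued (equivalently where $\sin_{\Omega^\circ},\cos_{\Omega^\circ}$ are differentiable); for $\phi\in\mathsf{D}_0$ write $\phi_\circ=C_\circ(\phi)$. Reduced Jacobian: for $\phi,\phi+\psi\in\mathsf{D}_0$, $\mathcal{J}_R(\phi,\psi)=2-\big(\sin_{\Omega^\circ}(\phi+\psi)\sin_\Omega(\phi_\circ)+\cos_{\Omega^\circ}(\phi+\psi)\cos_\Omega(\phi_\circ)\big)-\big(\sin_\Omega((\phi+\psi)_\circ)\sin_{\Omega^\circ}(\phi)+\cos_\Omega((\phi+\psi)_\circ)\cos_{\Omega^\circ}(\phi)\big)-\psi\big(\sin_\Omega((\phi+\psi)_\circ)\cos_\Omega(\phi_\circ)-\cos_\Omega((\phi+\psi)_\circ)\sin_\Omega(\phi_\circ)\big)$. *)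

theory Defs
  imports "HOL-Analysis.Analysis"
begin

definition pairing :: "real \<times> real \<Rightarrow> real \<times> real \<Rightarrow> real" where
  "pairing p x = fst p * fst x + snd p * snd x"

definition is_norm :: "(real \<times> real \<Rightarrow> real) \<Rightarrow> bool" where
  "is_norm N \<longleftrightarrow> (\<forall>x. 0 \<le> N x) \<and> (\<forall>x. N x = 0 \<longleftrightarrow> x = 0)
     \<and> (\<forall>c x. N (c *\<^sub>R x) = \<bar>c\<bar> * N x) \<and> (\<forall>x y. N (x + y) \<le> N x + N y)"

definition C1_norm :: "(real \<times> real \<Rightarrow> real) \<Rightarrow> bool" where
  "C1_norm N \<longleftrightarrow> (\<exists>N' :: real \<times> real \<Rightarrow> ((real \<times> real) \<Rightarrow>\<^sub>L real).
      (\<forall>x. x \<noteq> 0 \<longrightarrow> (N has_derivative blinfun_apply (N' x)) (at x))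
      \<and> continuous_on (UNIV - {0}) N')"

definition Omega :: "(real \<times> real \<Rightarrow> real) \<Rightarrow> (real \<times> real) set" where
  "Omega N = {x. N x \<le> 1}"

definition polar :: "(real \<times> real) set \<Rightarrow> (real \<times> real) set" where
  "polar S = {p. \<forall>x\<in>S. pairing p x \<le> 1}"

definition piS :: "(real \<times> real) set \<Rightarrow> real" where
  "piS S = measure lebesgue S"

definition sector :: "(real \<times> real) set \<Rightarrow> real \<Rightarrow> (real \<times> real) set" where
  "sector S \<alpha> = {x \<in> S. \<exists>r\<ge>0. \<exists>t\<in>{0..\<alpha>}. x = (r * cos t, r * sin t)}"

definition tpoint :: "(real \<times> real) set \<Rightarrow> real \<Rightarrow> real \<times> real" where
  "tpoint S \<theta> = (THE p. p \<in> frontier S \<and>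
      (\<exists>\<alpha>\<in>{0..<2*pi}. \<exists>r>0. p = (r * cos \<alpha>, r * sin \<alpha>) \<and>
         2 * measure lebesgue (sector S \<alpha>) = \<theta> - 2 * piS S * of_int \<lfloor>\<theta> / (2 * piS S)\<rfloor>))"

definition cosT :: "(real \<times> real) set \<Rightarrow> real \<Rightarrow> real" where
  "cosT S \<theta> = fst (tpoint S \<theta>)"

definition sinT :: "(real \<times> real) set \<Rightarrow> real \<Rightarrow> real" where
  "sinT S \<theta> = snd (tpoint S \<theta>)"

definition corresp :: "(real \<times> real \<Rightarrow> real) \<Rightarrow> real \<Rightarrow> real \<Rightarrow> bool" where
  "corresp N \<theta> \<phi> \<longleftrightarrow>
     cosT (Omega N) \<theta> * cosT (polar (Omega N)) \<phi> + sinT (Omega N) \<theta> * sinT (polar (Omega N)) \<phi> = 1"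

text \<open>C is an admissible choice of the multivalued map C_lower: each value is a maximal closed
  interval of angles corresponding to phi, the map is nondecreasing, and it satisfies the
  normalisation C(phi + 2 k pi_polar) = C(phi) + 2 k pi_Omega.\<close>
definition is_Clow :: "(real \<times> real \<Rightarrow> real) \<Rightarrow> (real \<Rightarrow> real set) \<Rightarrow> bool" where
  "is_Clow N C \<longleftrightarrow>
     (\<forall>\<phi>. (\<exists>a b. a \<le> b \<and> C \<phi> = {a..b}) \<and> C \<phi> \<subseteq> {\<theta>. corresp N \<theta> \<phi>} \<and>
        (\<forall>J. is_interval J \<and> C \<phi> \<subseteq> J \<and> J \<subseteq> {\<theta>. corresp N \<theta> \<phi>} \<longrightarrow> J = C \<phi>)) \<and>
     (\<forall>\<phi>1 \<phi>2 \<theta>1 \<theta>2. \<phi>1 < \<phi>2 \<and> \<theta>1 \<in> C \<phi>1 \<and> \<theta>2 \<in> C \<phi>2 \<longrightarrow> \<theta>1 \<le> \<theta>2) \<and>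
     (\<forall>\<phi> (k::int). C (\<phi> + 2 * of_int k * piS (polar (Omega N))) =
                   (\<lambda>\<theta>. \<theta> + 2 * of_int k * piS (Omega N)) ` C \<phi>)"

definition Cup :: "(real \<Rightarrow> real set) \<Rightarrow> real \<Rightarrow> real set" where
  "Cup C \<theta> = {\<phi>. \<theta> \<in> C \<phi>}"

text \<open>C^upper(C_lower(phi)) = [phi - delta_minus, phi + delta_plus].\<close>
definition delta_minus :: "(real \<Rightarrow> real set) \<Rightarrow> real \<Rightarrow> real" where
  "delta_minus C \<phi> = \<phi> - Inf (\<Union>\<theta>\<in>C \<phi>. Cup C \<theta>)"

definition D0 :: "(real \<Rightarrow> real set) \<Rightarrow> real set" where
  "D0 C = {\<phi>. \<exists>\<theta>. C \<phi> = {\<theta>}}"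

definition phio :: "(real \<Rightarrow> real set) \<Rightarrow> real \<Rightarrow> real" where
  "phio C \<phi> = (THE \<theta>. C \<phi> = {\<theta>})"

definition JR :: "(real \<times> real \<Rightarrow> real) \<Rightarrow> (real \<Rightarrow> real set) \<Rightarrow> real \<Rightarrow> real \<Rightarrow> real" where
  "JR N C \<phi> \<psi> =
     (let cO = cosT (Omega N); sO = sinT (Omega N);
          cP = cosT (polar (Omega N)); sP = sinT (polar (Omega N));
          a = phio C \<phi>; b = phio C (\<phi> + \<psi>)
      in 2 - (sP (\<phi> + \<psi>) * sO a + cP (\<phi> + \<psi>) * cO a)
           - (sO b * sP \<phi> + cO b * cP \<phi>)
           - \<psi> * (sO b * cO a - cO b * sO a))"

end

theory Submission
  imports Defs
begin

definition cross :: "real \<times> real \<Rightarrow> real \<times> real \<Rightarrow> real" where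
  "cross u v = fst u * snd v - snd u * fst v"

definition ang :: "real \<times> real \<Rightarrow> real" where
  "ang x = Arg2pi (Complex (fst x) (snd x))"

lemma ang_ge0: "0 \<le> ang x" and ang_lt: "ang x < 2*pi"
  unfolding ang_def using Arg2pi by auto

lemma cmod_Complex_norm: "cmod (Complex (fst x) (snd x)) = norm x"
  by (simp add: complex_norm norm_prod_def)

lemma polar_rep: "x = (norm x * cos (ang x), norm x * sin (ang x))"
proof -
  have "norm x * cos (ang x) = fst x" "norm x * sin (ang x) = snd x"
    using cos_Arg2pi[of "Complex (fst x) (snd x)"] sin_Arg2pi[of "Complex (fst x) (snd x)"]
    by (simp_all add: ang_def cmod_Complex_norm)
  then show ?thesis by (simp add: prod_eq_iff)
qed

lemma norm_polar: "norm (r * cos t, r * sin t) = \<bar>r\<bar>"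
proof -
  have "norm (r * cos t, r * sin t) = sqrt ((r * cos t)^2 + (r * sin t)^2)"
    by (simp add: norm_prod_def)
  also have "(r * cos t)^2 + (r * sin t)^2 = r^2"
    by (simp add: power_mult_distrib) (metis mult.right_neutral distrib_left sin_cos_squared_add2 add.commute)
  finally show ?thesis by simp
qed

lemma ang_polar:
  assumes "r > 0" shows "\<exists>n::int. t = ang (r * cos t, r * sin t) + 2*pi*n"
proof -
  let ?x = "(r * cos t, r * sin t)"
  have nx: "norm ?x = r" using assms norm_polar[of r t] by simp
  have "?x = (r * cos (ang ?x), r * sin (ang ?x))" using polar_rep[of ?x] nx by simp
  then have "cos t = cos (ang ?x)" "sin t = sin (ang ?x)" using assms by auto
  then show ?thesis using sin_cos_eq_iff by metis
qed

lemma ang_polar_le: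
  assumes "r > 0" "0 \<le> t" shows "ang (r * cos t, r * sin t) \<le> t"
proof -
  obtain n::int where n: "t = ang (r * cos t, r * sin t) + 2*pi*n" using ang_polar assms by blast
  have "n \<ge> 0"
  proof (rule ccontr)
    assume "\<not> n \<ge> 0" then have "real_of_int n \<le> -1" by simp
    then have "pi*n \<le> pi * (-1)" by (intro mult_left_mono) auto
    then have "2*pi*n \<le> -2*pi" by simp
    then show False using n assms ang_lt[of "(r * cos t, r * sin t)"] by linarith
  qed
  then have "2*pi*n \<ge> 0" by simp
  then show ?thesis using n by linarith
qed

lemma ang_polar_eq:
  assumes "r > 0" "0 \<le> t" "t < 2*pi" shows "ang (r * cos t, r * sin t) = t"
proof -
  obtain n::int where n: "t = ang (r * cos t, r * sin t) + 2*pi*n" using ang_polar assms by blast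
  have "n = 0"
  proof (rule ccontr)
    assume "n \<noteq> 0"
    then consider "real_of_int n \<le> -1" | "real_of_int n \<ge> 1" by linarith
    then show False
    proof cases
      case 1 then have "pi*n \<le> pi * (-1)" by (intro mult_left_mono) auto
      then have "2*pi*n \<le> -2*pi" by simp
      then show False using n assms ang_lt[of "(r * cos t, r * sin t)"] by linarith
    next
      case 2 then have "pi*n \<ge> pi * 1" by (intro mult_left_mono) auto
      then have "2*pi*n \<ge> 2*pi" by simp
      then show False using n assms ang_ge0[of "(r * cos t, r * sin t)"] by linarith
    qed
  qed
  then show ?thesis using n by simp
qed

lemma sector_char:
  assumes "0 \<le> \<beta>" shows "sector S \<beta> = {x\<in>S. x = 0 \<or> ang x \<le> \<beta>}"
proof (intro set_eqI iffI)
  fix x assume "x \<in> sector S \<beta>"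
  then obtain r t where x: "x \<in> S" "r \<ge> 0" "t \<in> {0..\<beta>}" "x = (r * cos t, r * sin t)"
    unfolding sector_def by blast
  show "x \<in> {x\<in>S. x = 0 \<or> ang x \<le> \<beta>}"
  proof (cases "r = 0")
    case True then show ?thesis using x by (simp add: zero_prod_def)
  next
    case False then have "ang x \<le> t" using x ang_polar_le by auto
    then show ?thesis using x by auto
  qed
next
  fix x assume x: "x \<in> {x\<in>S. x = 0 \<or> ang x \<le> \<beta>}"
  show "x \<in> sector S \<beta>"
  proof (cases "x = 0")
    case True then show ?thesis using x assms unfolding sector_def
      by (auto intro!: exI[of _ 0] bexI[of _ 0] simp: zero_prod_def)
  next
    case False
    then have "ang x \<le> \<beta>" using x by auto
    then show ?thesis using x polar_rep[of x] ang_ge0[of x] unfolding sector_def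
      by (auto intro!: exI[of _ "norm x"] bexI[of _ "ang x"])
  qed
qed

lemma sector_mono: "\<alpha> \<le> \<beta> \<Longrightarrow> sector S \<alpha> \<subseteq> sector S \<beta>"
  unfolding sector_def by fastforce

lemma sector_full: assumes "2*pi \<le> \<beta>" shows "sector S \<beta> = S"
proof -
  have "0 \<le> \<beta>" using pi_gt_zero assms by linarith
  have "\<And>x. ang x \<le> \<beta>" using ang_lt assms by (meson less_eq_real_def order_trans)
  then show ?thesis using sector_char[OF \<open>0 \<le> \<beta>\<close>, of S] by auto
qed

definition body :: "(real \<times> real) set \<Rightarrow> bool" where
  "body S \<longleftrightarrow> compact S \<and> convex S \<and> (\<forall>x\<in>S. - x \<in> S) \<and> 0 \<in> interior S"

definition FS :: "(real \<times> real) set \<Rightarrow> real \<Rightarrow> real" where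
  "FS S \<beta> = measure lebesgue (sector S \<beta>)"

lemma body_bound: assumes "body S" obtains R where "R > 0" "\<And>x. x \<in> S \<Longrightarrow> norm x \<le> R"
proof -
  have "bounded S" using assms compact_imp_bounded unfolding body_def by blast
  then obtain a where "\<forall>x\<in>S. norm x \<le> a" unfolding bounded_iff by blast
  then show ?thesis using that[of "max a 1"] by force
qed

lemma sector_memI: assumes "x \<in> S" "r \<ge> 0" "0 \<le> t" "t \<le> \<beta>" "x = (r * cos t, r * sin t)"
  shows "x \<in> sector S \<beta>"
  unfolding sector_def using assms by (intro CollectI conjI exI[of _ r] bexI[of _ t]) auto

lemma sector_neg: "\<beta> < 0 \<Longrightarrow> sector S \<beta> = {}"
  unfolding sector_def by auto

lemma sector_sub: "sector S \<beta> \<subseteq> S"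
  unfolding sector_def by auto

lemma sector_compact:
  assumes "body S" shows "compact (sector S \<beta>)"
proof (cases "\<beta> < 0")
  case True then show ?thesis by (simp add: sector_neg)
next
  case False
  obtain R where R: "R > 0" "\<And>x. x \<in> S \<Longrightarrow> norm x \<le> R" using body_bound assms by blast
  let ?g = "\<lambda>p::real\<times>real. (fst p * cos (snd p), fst p * sin (snd p))"
  have eq: "sector S \<beta> = S \<inter> ?g ` ({0..R} \<times> {0..\<beta>})"
  proof (intro set_eqI iffI)
    fix x assume "x \<in> sector S \<beta>"
    then obtain r t where x: "x \<in> S" "r \<ge> 0" "t \<in> {0..\<beta>}" "x = (r * cos t, r * sin t)"
      unfolding sector_def by blast
    have "r \<le> R" using R(2)[OF x(1)] x(2,4) norm_polar[of r t] by simp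
    then show "x \<in> S \<inter> ?g ` ({0..R} \<times> {0..\<beta>})" using x
      by (auto intro!: image_eqI[of _ _ "(r,t)"])
  next
    fix x assume "x \<in> S \<inter> ?g ` ({0..R} \<times> {0..\<beta>})"
    then obtain r t where rt: "x \<in> S" "r \<in> {0..R}" "t \<in> {0..\<beta>}" "x = (r * cos t, r * sin t)" by auto
    have "\<exists>r'\<ge>0. \<exists>t'\<in>{0..\<beta>}. x = (r' * cos t', r' * sin t')"
      using rt by (intro exI[of _ r] conjI bexI[of _ t]) auto
    then show "x \<in> sector S \<beta>" unfolding sector_def using rt(1) by blast
  qed
  have "compact (?g ` ({0..R} \<times> {0..\<beta>}))"
    by (intro compact_continuous_image compact_Times compact_Icc continuous_intros)
  moreover have "compact S" using assms unfolding body_def by blast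
  ultimately show ?thesis unfolding eq by (rule compact_Int[rotated])
qed

lemma sector_lmeas: "body S \<Longrightarrow> sector S \<beta> \<in> lmeasurable"
  using sector_compact lmeasurable_compact by blast

lemma FS_mono: assumes "body S" "\<alpha> \<le> \<beta>" shows "FS S \<alpha> \<le> FS S \<beta>"
  unfolding FS_def
  by (rule measure_mono_fmeasurable[OF sector_mono[OF assms(2)] fmeasurableD[OF sector_lmeas[OF assms(1)]] sector_lmeas[OF assms(1)]])

lemma FS_zero: "FS S 0 = 0"
proof -
  have "sector S 0 \<subseteq> {x. (0,1) \<bullet> x = (0::real)}"
    unfolding sector_def by (auto simp: inner_prod_def)
  moreover have "negligible {x::real\<times>real. (0,1) \<bullet> x = (0::real)}"
    by (rule negligible_hyperplane) (simp add: zero_prod_def)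
  ultimately show ?thesis unfolding FS_def
    using negligible_imp_measure0 negligible_subset by blast
qed

lemma FS_full: "2*pi \<le> \<beta> \<Longrightarrow> FS S \<beta> = measure lebesgue S"
  unfolding FS_def using sector_full by simp

lemma cplx_cont: "continuous_on UNIV (\<lambda>x::real\<times>real. Complex (fst x) (snd x))"
  unfolding Complex_eq by (intro continuous_intros)

lemma FS_strict:
  assumes "body S" "0 \<le> \<alpha>" "\<alpha> < \<beta>" "\<beta> \<le> 2*pi"
  shows "FS S \<alpha> < FS S \<beta>"
proof -
  obtain e where e: "e > 0" "cball 0 e \<subseteq> S"
    using assms(1) unfolding body_def mem_interior_cball by blast
  let ?c = "\<lambda>x::real\<times>real. Complex (fst x) (snd x)"
  define U where "U = ball 0 e \<inter> ?c -` ({y. \<alpha> < Arg2pi y} \<inter> {y. Arg2pi y < \<beta>})"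
  have "open U" unfolding U_def
    by (intro open_Int open_ball open_vimage open_Arg2pi2pi_less_Int cplx_cont assms)
  define \<gamma> where "\<gamma> = (\<alpha>+\<beta>)/2"
  define m where "m = (e/2 * cos \<gamma>, e/2 * sin \<gamma>)"
  have "ang m = \<gamma>" unfolding m_def \<gamma>_def by (rule ang_polar_eq) (use assms e in auto)
  moreover have "norm m = e/2" unfolding m_def using norm_polar[of "e/2" \<gamma>] e by simp
  ultimately have "m \<in> U" unfolding U_def using e assms by (auto simp: \<gamma>_def ang_def[symmetric])
  then have "U \<noteq> {}" by blast
  have sub: "U \<subseteq> sector S \<beta> - sector S \<alpha>"
  proof
    fix x assume "x \<in> U"
    then have x: "norm x < e" "\<alpha> < ang x" "ang x < \<beta>" unfolding U_def ang_def by auto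
    have "x \<in> S" using x(1) e(2) by auto
    have c0: "Complex 0 0 = 0" by (simp add: complex_eq_iff)
    have "x \<noteq> 0" using x(2) assms(2) by (auto simp: ang_def zero_prod_def c0)
    show "x \<in> sector S \<beta> - sector S \<alpha>"
      using sector_char[of \<alpha> S] sector_char[of \<beta> S] assms x \<open>x \<in> S\<close> \<open>x \<noteq> 0\<close> by auto
  qed
  have "\<not> negligible U" using open_not_negligible \<open>open U\<close> \<open>U \<noteq> {}\<close> by blast
  then have nn: "\<not> negligible (sector S \<beta> - sector S \<alpha>)" using sub negligible_subset by blast
  have lm: "sector S \<beta> \<in> lmeasurable" "sector S \<alpha> \<in> lmeasurable" using sector_lmeas assms by auto
  have "measure lebesgue (sector S \<beta> - sector S \<alpha>) = FS S \<beta> - FS S \<alpha>"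
    unfolding FS_def using lm sector_mono[of \<alpha> \<beta> S] assms
    by (intro measure_Diff) (auto simp: fmeasurableD emeasure_eq_measure2)
  moreover have "sector S \<beta> - sector S \<alpha> \<in> lmeasurable"
    using lm by (simp add: fmeasurable_Diff fmeasurableD)
  moreover have "FS S \<alpha> \<le> FS S \<beta>" using FS_mono assms by simp
  ultimately show ?thesis
  proof -
    assume h: "measure lebesgue (sector S \<beta> - sector S \<alpha>) = FS S \<beta> - FS S \<alpha>"
      "sector S \<beta> - sector S \<alpha> \<in> lmeasurable" "FS S \<alpha> \<le> FS S \<beta>"
    show ?thesis
    proof (rule ccontr)
      assume "\<not> FS S \<alpha> < FS S \<beta>"
      then have "measure lebesgue (sector S \<beta> - sector S \<alpha>) = 0" using h(1,3) by simp
      then have "negligible (sector S \<beta> - sector S \<alpha>)" using negligible_iff_measure0[OF h(2)] by simp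
      then show False using nn by simp
    qed
  qed
qed

lemma sector_sets: "body S \<Longrightarrow> sector S \<beta> \<in> sets lebesgue"
  using sector_lmeas fmeasurableD by blast

lemma FS_right:
  assumes "body S" "0 \<le> \<alpha>" "e > 0"
  shows "\<exists>d>0. \<forall>\<beta>. \<alpha> \<le> \<beta> \<and> \<beta> < \<alpha> + d \<longrightarrow> FS S \<beta> - FS S \<alpha> < e"
proof -
  define A where "A n = sector S (\<alpha> + inverse (real (Suc n)))" for n
  have dec: "decseq A" unfolding A_def decseq_def
    by (intro allI impI sector_mono) (simp add: frac_le)
  have int: "(\<Inter>n. A n) = sector S \<alpha>"
  proof (intro set_eqI iffI)
    fix x assume x: "x \<in> (\<Inter>n. A n)"
    then have xs: "x \<in> S" unfolding A_def using sector_sub by blast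
    have h: "x = 0 \<or> ang x \<le> \<alpha> + inverse (real (Suc n))" for n
      using x sector_char[of "\<alpha> + inverse (real (Suc n))" S] assms(2) unfolding A_def
      by (auto simp: add_nonneg_nonneg)
    have "x = 0 \<or> ang x \<le> \<alpha>"
    proof (rule ccontr)
      assume "\<not> (x = 0 \<or> ang x \<le> \<alpha>)"
      then have "x \<noteq> 0" "ang x - \<alpha> > 0" by auto
      then obtain n where "inverse (real (Suc n)) < ang x - \<alpha>" using reals_Archimedean by blast
      then show False using h[of n] \<open>x \<noteq> 0\<close> by auto
    qed
    then show "x \<in> sector S \<alpha>" using sector_char[of \<alpha> S] assms(2) xs by auto
  next
    fix x assume "x \<in> sector S \<alpha>"
    moreover have "sector S \<alpha> \<subseteq> A n" for n unfolding A_def by (rule sector_mono) simp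
    ultimately show "x \<in> (\<Inter>n. A n)" by blast
  qed
  have "(\<lambda>n. measure lebesgue (A n)) \<longlonglongrightarrow> measure lebesgue (\<Inter>n. A n)"
  proof (rule Lim_measure_decseq)
    show "range A \<subseteq> sets lebesgue" unfolding A_def using sector_sets[OF assms(1)] by auto
    show "decseq A" by (rule dec)
    show "emeasure lebesgue (A n) \<noteq> \<infinity>" for n
      unfolding A_def using fmeasurableD2[OF sector_lmeas[OF assms(1)]] by simp
  qed
  then have lim: "(\<lambda>n. FS S (\<alpha> + inverse (real (Suc n)))) \<longlonglongrightarrow> FS S \<alpha>"
    unfolding int unfolding A_def FS_def .
  then obtain n where n: "norm (FS S (\<alpha> + inverse (real (Suc n))) - FS S \<alpha>) < e"
    using assms(3) unfolding LIMSEQ_iff by blast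
  show ?thesis
  proof (intro exI[of _ "inverse (real (Suc n))"] conjI allI impI)
    fix \<beta> assume b: "\<alpha> \<le> \<beta> \<and> \<beta> < \<alpha> + inverse (real (Suc n))"
    have "FS S \<beta> \<le> FS S (\<alpha> + inverse (real (Suc n)))" using b FS_mono assms by simp
    then show "FS S \<beta> - FS S \<alpha> < e" using n by simp
  qed simp
qed

lemma FS_left:
  assumes "body S" "0 < \<alpha>" "e > 0"
  shows "\<exists>d>0. \<forall>\<beta>. \<alpha> - d < \<beta> \<and> \<beta> \<le> \<alpha> \<longrightarrow> FS S \<alpha> - FS S \<beta> < e"
proof -
  define h where "h n = \<alpha> / real (n+2)" for n
  have hpos: "h n > 0" for n unfolding h_def using assms by simp
  have hle: "h n \<le> \<alpha>/2" for n unfolding h_def using assms by (intro divide_left_mono) auto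
  define A where "A n = sector S (\<alpha> - h n)" for n
  have inc: "incseq A" unfolding A_def incseq_def h_def
    by (intro allI impI sector_mono) (use assms in \<open>simp add: frac_le\<close>)
  have sub: "(\<Union>n. A n) \<subseteq> sector S \<alpha>"
    unfolding A_def by (intro UN_least sector_mono) (use hpos in \<open>simp add: less_imp_le\<close>)
  have L: "sector S \<alpha> - (\<Union>n. A n) \<subseteq> {x. (sin \<alpha>, - cos \<alpha>) \<bullet> x = 0}"
  proof
    fix x assume x: "x \<in> sector S \<alpha> - (\<Union>n. A n)"
    have xs: "x \<in> S" using x sector_sub by blast
    have a0: "0 \<le> \<alpha> - h n" for n using hle[of n] assms by simp
    have nA: "\<not> (x = 0 \<or> ang x \<le> \<alpha> - h n)" for n
      using x xs sector_char[OF a0[of n], of S] unfolding A_def by auto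
    have "x = 0 \<or> ang x \<le> \<alpha>" using x sector_char[of \<alpha> S] assms by auto
    then have ax: "ang x \<le> \<alpha>" "x \<noteq> 0" using nA[of 0] by auto
    have "ang x = \<alpha>"
    proof (rule ccontr)
      assume "ang x \<noteq> \<alpha>"
      then have "(\<alpha> - ang x) / \<alpha> > 0" using ax assms by simp
      then obtain n where n: "inverse (real (Suc n)) < (\<alpha> - ang x) / \<alpha>"
        using reals_Archimedean by blast
      have "h n \<le> \<alpha> * inverse (real (Suc n))" unfolding h_def using assms
        by (simp add: field_simps)
      also have "\<dots> < \<alpha> - ang x" using n assms by (simp add: field_simps)
      finally show False using nA[of n] by simp
    qed
    then have "fst x = norm x * cos \<alpha>" "snd x = norm x * sin \<alpha>"
      using polar_rep[of x] by (metis fst_conv, metis snd_conv)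
    then show "x \<in> {x. (sin \<alpha>, - cos \<alpha>) \<bullet> x = 0}"
      by (simp add: inner_prod_def algebra_simps)
  qed
  have negL: "negligible {x::real\<times>real. (sin \<alpha>, - cos \<alpha>) \<bullet> x = 0}"
  proof (rule negligible_hyperplane)
    have "(sin \<alpha>, - cos \<alpha>) \<noteq> 0"
    proof
      assume "(sin \<alpha>, - cos \<alpha>) = 0"
      then have "sin \<alpha> = 0" "cos \<alpha> = 0" by (auto simp: zero_prod_def)
      then show False using sin_cos_squared_add[of \<alpha>] by simp
    qed
    then show "(sin \<alpha>, - cos \<alpha>) \<noteq> 0 \<or> (0::real) \<noteq> 0" by blast
  qed
  have Ameas: "range A \<subseteq> sets lebesgue" unfolding A_def using sector_sets[OF assms(1)] by auto
  have Um: "(\<Union>n. A n) \<in> sets lebesgue" using Ameas by auto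
  have Ufin: "(\<Union>n. A n) \<in> lmeasurable"
    using fmeasurableI2[OF sector_lmeas[OF assms(1)] sub Um] .
  have eqm: "measure lebesgue (\<Union>n. A n) = FS S \<alpha>"
    unfolding FS_def
  proof (rule measure_negligible_symdiff[OF sector_lmeas[OF assms(1)]])
    show "negligible (sector S \<alpha> - (\<Union>n. A n) \<union> ((\<Union>n. A n) - sector S \<alpha>))"
      using sub L negL negligible_subset by (metis Diff_eq_empty_iff sup_bot.right_neutral)
  qed
  have "(\<lambda>n. measure lebesgue (A n)) \<longlonglongrightarrow> measure lebesgue (\<Union>n. A n)"
    using Lim_measure_incseq[OF Ameas inc] fmeasurableD2[OF Ufin] by (simp only: infinity_ennreal_def) blast
  then have lim: "(\<lambda>n. FS S (\<alpha> - h n)) \<longlonglongrightarrow> FS S \<alpha>"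
    unfolding eqm unfolding A_def FS_def .
  then obtain n where n: "norm (FS S (\<alpha> - h n) - FS S \<alpha>) < e"
    using assms(3) unfolding LIMSEQ_iff by blast
  show ?thesis
  proof (intro exI[of _ "h n"] conjI allI impI)
    fix \<beta> assume b: "\<alpha> - h n < \<beta> \<and> \<beta> \<le> \<alpha>"
    have "FS S (\<alpha> - h n) \<le> FS S \<beta>" using b FS_mono assms by simp
    then show "FS S \<alpha> - FS S \<beta> < e" using n FS_mono[OF assms(1) b[THEN conjunct2]] by simp
  qed (rule hpos)
qed

lemma FS_cont: assumes "body S" shows "continuous_on {0..2*pi} (FS S)"
  unfolding continuous_on_iff
proof (intro ballI allI impI)
  fix x e :: real assume x: "x \<in> {0..2*pi}" and e: "0 < e"
  obtain d1 where d1: "d1 > 0" "\<forall>\<beta>. x \<le> \<beta> \<and> \<beta> < x + d1 \<longrightarrow> FS S \<beta> - FS S x < e"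
    using FS_right[OF assms _ e] x by auto
  obtain d2 where d2: "d2 > 0" "\<forall>\<beta>. x - d2 < \<beta> \<and> \<beta> \<le> x \<and> 0 \<le> \<beta> \<longrightarrow> FS S x - FS S \<beta> < e"
  proof (cases "x = 0")
    case True
    have "\<forall>\<beta>. x - 1 < \<beta> \<and> \<beta> \<le> x \<and> 0 \<le> \<beta> \<longrightarrow> FS S x - FS S \<beta> < e"
    proof (intro allI impI)
      fix \<beta> assume "x - 1 < \<beta> \<and> \<beta> \<le> x \<and> 0 \<le> \<beta>"
      then have "\<beta> = x" using True by simp
      then show "FS S x - FS S \<beta> < e" using e by simp
    qed
    then show ?thesis using that[of 1] by simp
  next
    case False then have "0 < x" using x by auto
    then show ?thesis using FS_left[OF assms _ e] that by blast
  qed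
  show "\<exists>d>0. \<forall>x'\<in>{0..2*pi}. dist x' x < d \<longrightarrow> dist (FS S x') (FS S x) < e"
  proof (intro exI[of _ "min d1 d2"] conjI ballI impI)
    fix x' assume x': "x' \<in> {0..2*pi}" "dist x' x < min d1 d2"
    show "dist (FS S x') (FS S x) < e"
    proof (cases "x \<le> x'")
      case True
      then have "FS S x' - FS S x < e" using d1 x' by (auto simp: dist_real_def)
      moreover have "FS S x \<le> FS S x'" using FS_mono[OF assms True] .
      ultimately show ?thesis by (simp add: dist_real_def)
    next
      case False
      then have "FS S x - FS S x' < e" using d2 x' by (auto simp: dist_real_def)
      moreover have "FS S x' \<le> FS S x" using FS_mono[OF assms] False by simp
      ultimately show ?thesis by (simp add: dist_real_def)
    qed
  qed (use d1 d2 in auto)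
qed

lemma sector_half:
  assumes "body S" "0 \<le> \<alpha>" "\<alpha> \<le> pi"
  shows "sector S (\<alpha> + pi) = sector S pi \<union> uminus ` sector S \<alpha>"
proof (intro set_eqI iffI)
  have symm: "\<And>x. x \<in> S \<Longrightarrow> - x \<in> S" using assms(1) unfolding body_def by blast
  {
    fix x assume "x \<in> sector S (\<alpha> + pi)"
    then obtain r t where x: "x \<in> S" "r \<ge> 0" "t \<in> {0..\<alpha>+pi}" "x = (r * cos t, r * sin t)"
      unfolding sector_def by blast
    show "x \<in> sector S pi \<union> uminus ` sector S \<alpha>"
    proof (cases "t \<le> pi")
      case True
      then have "x \<in> sector S pi" using x by (intro sector_memI[of _ _ r t]) auto
      then show ?thesis by blast
    next
      case False
      have "- x \<in> S" using symm x by blast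
      moreover have "- x = (r * cos (t - pi), r * sin (t - pi))" using x by (simp add: cos_diff sin_diff)
      ultimately have "- x \<in> sector S \<alpha>" using x False
        by (intro sector_memI[of _ _ r "t - pi"]) auto
      then have "- (- x) \<in> uminus ` sector S \<alpha>" by blast
      then show ?thesis by simp
    qed
  }
  {
    fix x assume "x \<in> sector S pi \<union> uminus ` sector S \<alpha>"
    then consider "x \<in> sector S pi" | "x \<in> uminus ` sector S \<alpha>" by blast
    then show "x \<in> sector S (\<alpha> + pi)"
    proof cases
      case 1 then show ?thesis using sector_mono[of pi "\<alpha> + pi" S] assms by auto
    next
      case 2
      then obtain y where y: "y \<in> sector S \<alpha>" "x = - y" by blast
      then obtain r t where yy: "y \<in> S" "r \<ge> 0" "t \<in> {0..\<alpha>}" "y = (r * cos t, r * sin t)"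
        unfolding sector_def by blast
      have "x \<in> S" using symm yy y by blast
      moreover have "x = (r * cos (t + pi), r * sin (t + pi))" using y yy by (simp add: cos_add sin_add)
      ultimately show ?thesis using yy
        by (intro sector_memI[of _ _ r "t + pi"]) auto
    qed
  }
qed

lemma measure_neg: assumes "X \<in> lmeasurable" shows "measure lebesgue (uminus ` X) = measure lebesgue (X::(real\<times>real) set)"
proof -
  have "uminus ` X = (\<lambda>x. (-1) *\<^sub>R x + 0) ` X" by simp
  then show ?thesis using measure_lebesgue_affine[of "-1" 0 X] by simp
qed

lemma FS_half:
  assumes "body S" "0 \<le> \<alpha>" "\<alpha> \<le> pi"
  shows "FS S (\<alpha> + pi) = FS S \<alpha> + FS S pi"
proof -
  have c: "compact (uminus ` sector S \<alpha>)" using compact_negations[OF sector_compact[OF assms(1)]] by simp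
  have m1: "sector S pi \<in> lmeasurable" "uminus ` sector S \<alpha> \<in> lmeasurable"
    using sector_lmeas[OF assms(1)] lmeasurable_compact[OF c] by auto
  have "sector S pi \<inter> uminus ` sector S \<alpha> \<subseteq> {x. (0,1) \<bullet> x = (0::real)}"
  proof
    fix x assume x: "x \<in> sector S pi \<inter> uminus ` sector S \<alpha>"
    then obtain r t where rt: "r \<ge> 0" "t \<in> {0..pi}" "x = (r * cos t, r * sin t)"
      unfolding sector_def by blast
    obtain r' t' where rt': "r' \<ge> 0" "t' \<in> {0..\<alpha>}" "x = - (r' * cos t', r' * sin t')"
      using x unfolding sector_def by blast
    have "snd x \<ge> 0" using rt sin_ge_zero by simp
    moreover have "snd x \<le> 0" using rt' sin_ge_zero[of t'] assms by simp
    ultimately show "x \<in> {x. (0,1) \<bullet> x = (0::real)}" by (simp add: inner_prod_def)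
  qed
  moreover have "negligible {x::real\<times>real. (0,1) \<bullet> x = (0::real)}"
    by (rule negligible_hyperplane) (simp add: zero_prod_def)
  ultimately have "measure lebesgue (sector S pi \<inter> uminus ` sector S \<alpha>) = 0"
    using negligible_imp_measure0 negligible_subset by blast
  then have "measure lebesgue (sector S pi \<union> uminus ` sector S \<alpha>) = FS S pi + FS S \<alpha>"
    using measure_Un3[OF m1] measure_neg[OF sector_lmeas[OF assms(1)]] unfolding FS_def by simp
  then show ?thesis using sector_half[OF assms] unfolding FS_def by simp
qed

definition md :: "(real \<times> real) set \<Rightarrow> real \<Rightarrow> real" where
  "md S \<theta> = \<theta> - 2 * piS S * of_int \<lfloor>\<theta> / (2 * piS S)\<rfloor>"

lemma FS_2pi: "FS S (2*pi) = piS S" unfolding piS_def by (rule FS_full) simp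

lemma FS_pi: assumes "body S" shows "FS S pi = piS S / 2"
  using FS_half[OF assms, of pi] FS_2pi[of S] by simp

lemma piS_pos: assumes "body S" shows "piS S > 0"
  using FS_strict[OF assms, of 0 "2*pi"] FS_zero[of S] FS_2pi[of S] by simp

lemma md_range: fixes P \<theta> :: real assumes "P > 0" shows "0 \<le> \<theta> - 2 * P * of_int \<lfloor>\<theta> / (2 * P)\<rfloor>" "\<theta> - 2 * P * of_int \<lfloor>\<theta> / (2 * P)\<rfloor> < 2 * P"
proof -
  have "of_int \<lfloor>\<theta> / (2 * P)\<rfloor> \<le> \<theta> / (2 * P)" "\<theta> / (2 * P) < of_int \<lfloor>\<theta> / (2 * P)\<rfloor> + 1"
    by linarith+
  then have "2 * P * of_int \<lfloor>\<theta> / (2 * P)\<rfloor> \<le> 2 * P * (\<theta> / (2 * P))"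
     "2 * P * (\<theta> / (2 * P)) < 2 * P * (of_int \<lfloor>\<theta> / (2 * P)\<rfloor> + 1)"
    using assms by (intro mult_left_mono mult_strict_left_mono; simp)+
  then show "0 \<le> \<theta> - 2 * P * of_int \<lfloor>\<theta> / (2 * P)\<rfloor>" "\<theta> - 2 * P * of_int \<lfloor>\<theta> / (2 * P)\<rfloor> < 2 * P"
    using assms by (simp_all add: field_simps)
qed

lemma md_eq: fixes P \<theta> s :: real assumes "P > 0" "0 \<le> s" "s < 2 * P" "\<theta> = s + 2 * P * of_int k"
  shows "\<theta> - 2 * P * of_int \<lfloor>\<theta> / (2 * P)\<rfloor> = s"
proof -
  have "\<theta> / (2 * P) = of_int k + s / (2 * P)" using assms by (simp add: field_simps)
  moreover have "0 \<le> s / (2*P)" "s / (2*P) < 1" using assms by (simp_all add: field_simps)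
  ultimately have "\<lfloor>\<theta> / (2 * P)\<rfloor> = k" by (simp add: floor_eq_iff)
  then show ?thesis using assms by simp
qed

lemma frontier_inter_interior: "x \<in> frontier S \<Longrightarrow> x \<notin> interior S"
  unfolding frontier_def by auto

lemma ray_frontier:
  assumes "body S" "u \<noteq> 0"
  shows "\<exists>!r. r > 0 \<and> r *\<^sub>R u \<in> frontier S"
proof -
  have conv: "convex S" and int0: "0 \<in> interior S" and comp: "compact S"
    using assms(1) unfolding body_def by auto
  obtain R where R: "R > 0" "\<And>x. x \<in> S \<Longrightarrow> norm x \<le> R" using body_bound assms(1) by blast
  define w where "w = ((R+1) / norm u) *\<^sub>R u"
  have nw: "norm w = R + 1" unfolding w_def using assms R by simp
  have "w \<notin> S" using R(2)[of w] nw by auto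
  have "0 \<in> S" using int0 interior_subset by blast
  have "closed_segment 0 w \<inter> frontier S \<noteq> {}"
  proof (rule connected_Int_frontier)
    show "connected (closed_segment 0 w)" by simp
    show "closed_segment 0 w \<inter> S \<noteq> {}" using \<open>0 \<in> S\<close> by auto
    show "closed_segment 0 w - S \<noteq> {}" using \<open>w \<notin> S\<close> by auto
  qed
  then obtain y where y: "y \<in> closed_segment 0 w" "y \<in> frontier S" by blast
  then obtain s where s: "0 \<le> s" "s \<le> 1" "y = s *\<^sub>R w" unfolding closed_segment_def by auto
  have "y \<noteq> 0" using y(2) int0 frontier_inter_interior by blast
  then have "s > 0" using s by auto
  have ex: "(s * (R+1) / norm u) > 0 \<and> (s * (R+1) / norm u) *\<^sub>R u \<in> frontier S"
    using \<open>s > 0\<close> R assms y s unfolding w_def by simp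
  show ?thesis
  proof (rule ex1I[of _ "s * (R+1) / norm u"])
    show "s * (R+1) / norm u > 0 \<and> (s * (R+1) / norm u) *\<^sub>R u \<in> frontier S" using ex .
  next
    have uniq: "r1 = r2" if h: "r1 > 0" "r1 *\<^sub>R u \<in> frontier S" "r2 > 0" "r2 *\<^sub>R u \<in> frontier S" "r1 \<le> r2" for r1 r2
    proof (rule ccontr)
      assume "r1 \<noteq> r2" then have lt: "r1 < r2" using h by simp
      have "r2 *\<^sub>R u \<in> closure S" using h(4) unfolding frontier_def by blast
      then have sub: "open_segment 0 (r2 *\<^sub>R u) \<subseteq> interior S"
        by (rule in_interior_closure_convex_segment[OF conv int0])
      have "r1 *\<^sub>R u \<in> open_segment 0 (r2 *\<^sub>R u)"
        unfolding in_segment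
      proof (intro conjI exI[of _ "r1 / r2"])
        show "0 \<noteq> r2 *\<^sub>R u" using h assms by simp
        show "0 < r1 / r2" "r1 / r2 < 1" using h lt by auto
        show "r1 *\<^sub>R u = (1 - r1 / r2) *\<^sub>R 0 + (r1 / r2) *\<^sub>R r2 *\<^sub>R u" using h by simp
      qed
      then show False using sub h(2) frontier_inter_interior by blast
    qed
    fix r assume "r > 0 \<and> r *\<^sub>R u \<in> frontier S"
    then show "r = s * (R+1) / norm u" using uniq ex by (metis linear)
  qed
qed

lemma alpha_exists:
  assumes "body S" "0 \<le> s" "s < 2 * piS S"
  shows "\<exists>\<alpha>. 0 \<le> \<alpha> \<and> \<alpha> < 2*pi \<and> 2 * FS S \<alpha> = s"
proof -
  have "\<exists>x\<ge>0. x \<le> 2*pi \<and> FS S x = s/2"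
    by (rule IVT') (use assms FS_zero[of S] FS_2pi[of S] FS_cont[OF assms(1)] in auto)
  then obtain x where x: "0 \<le> x" "x \<le> 2*pi" "FS S x = s/2" by blast
  have "x \<noteq> 2*pi" using x FS_2pi[of S] assms by auto
  then show ?thesis using x by (intro exI[of _ x]) auto
qed

lemma alpha_unique:
  assumes "body S" "0 \<le> \<alpha>1" "\<alpha>1 \<le> 2*pi" "0 \<le> \<alpha>2" "\<alpha>2 \<le> 2*pi" "FS S \<alpha>1 = FS S \<alpha>2"
  shows "\<alpha>1 = \<alpha>2"
  using FS_strict[OF assms(1), of \<alpha>1 \<alpha>2] FS_strict[OF assms(1), of \<alpha>2 \<alpha>1] assms
  by (cases "\<alpha>1 < \<alpha>2"; cases "\<alpha>2 < \<alpha>1") auto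

definition tpred :: "(real \<times> real) set \<Rightarrow> real \<Rightarrow> real \<times> real \<Rightarrow> bool" where
  "tpred S \<theta> p \<longleftrightarrow> p \<in> frontier S \<and>
      (\<exists>\<alpha>\<in>{0..<2*pi}. \<exists>r>0. p = (r * cos \<alpha>, r * sin \<alpha>) \<and>
         2 * measure lebesgue (sector S \<alpha>) = \<theta> - 2 * piS S * of_int \<lfloor>\<theta> / (2 * piS S)\<rfloor>)"

lemma tpoint_tpred: "tpoint S \<theta> = (THE p. tpred S \<theta> p)"
  unfolding tpoint_def tpred_def ..

lemma tpred_ex1: assumes "body S" shows "\<exists>!p. tpred S \<theta> p"
proof -
  have P: "piS S > 0" using piS_pos[OF assms] .
  obtain \<alpha> where a: "0 \<le> \<alpha>" "\<alpha> < 2*pi" "2 * FS S \<alpha> = md S \<theta>"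
    using alpha_exists[OF assms] md_range[OF P, of \<theta>] unfolding md_def by blast
  have u: "(cos \<alpha>, sin \<alpha>) \<noteq> 0"
  proof
    assume "(cos \<alpha>, sin \<alpha>) = 0"
    then have "sin \<alpha> = 0" "cos \<alpha> = 0" by (auto simp: zero_prod_def)
    then show False using sin_cos_squared_add[of \<alpha>] by simp
  qed
  obtain r where r: "r > 0" "r *\<^sub>R (cos \<alpha>, sin \<alpha>) \<in> frontier S"
    using ray_frontier[OF assms u] by blast
  have ex: "tpred S \<theta> (r * cos \<alpha>, r * sin \<alpha>)"
    unfolding tpred_def using a r by (auto simp: FS_def md_def)
  show ?thesis
  proof (rule ex1I[of "tpred S \<theta>" "(r * cos \<alpha>, r * sin \<alpha>)"])
    show "tpred S \<theta> (r * cos \<alpha>, r * sin \<alpha>)" by (rule ex)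
  next
    fix p assume "tpred S \<theta> p"
    then obtain \<beta> r' where b: "p \<in> frontier S" "0 \<le> \<beta>" "\<beta> < 2*pi" "r' > 0" "p = (r' * cos \<beta>, r' * sin \<beta>)"
      "2 * FS S \<beta> = md S \<theta>" unfolding tpred_def FS_def md_def by auto
    have "\<beta> = \<alpha>" using alpha_unique[OF assms, of \<beta> \<alpha>] a b by simp
    then have "r' *\<^sub>R (cos \<alpha>, sin \<alpha>) \<in> frontier S" using b by simp
    then have "r' = r" using ray_frontier[OF assms u] r b(4) by blast
    then show "p = (r * cos \<alpha>, r * sin \<alpha>)" using b \<open>\<beta> = \<alpha>\<close> by simp
  qed
qed

lemma tpoint_eqI: assumes "body S" "tpred S \<theta> p" shows "tpoint S \<theta> = p"
  unfolding tpoint_tpred using tpred_ex1[OF assms(1)] assms(2) by (rule the1_equality)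

lemma tpoint_char:
  assumes "body S"
  obtains \<alpha> r where "0 \<le> \<alpha>" "\<alpha> < 2*pi" "r > 0" "tpoint S \<theta> = (r * cos \<alpha>, r * sin \<alpha>)"
    "tpoint S \<theta> \<in> frontier S" "2 * FS S \<alpha> = md S \<theta>"
proof -
  have "tpred S \<theta> (tpoint S \<theta>)" unfolding tpoint_tpred using tpred_ex1[OF assms] by (rule theI')
  then show ?thesis using that unfolding tpred_def FS_def md_def by auto
qed

lemma body_closed: "body S \<Longrightarrow> closed S" unfolding body_def using compact_imp_closed by blast

lemma frontier_sub: "body S \<Longrightarrow> frontier S \<subseteq> S"
  using body_closed frontier_subset_closed by blast

lemma frontier_nz: "body S \<Longrightarrow> x \<in> frontier S \<Longrightarrow> x \<noteq> 0"
  unfolding body_def using frontier_inter_interior by blast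

lemma frontier_neg: assumes "body S" "x \<in> frontier S" shows "- x \<in> frontier S"
proof -
  have symm: "\<And>y. y \<in> S \<Longrightarrow> - y \<in> S" using assms(1) unfolding body_def by blast
  have "x \<in> S" using assms frontier_sub by blast
  then have "- x \<in> S" using symm by blast
  then have c: "- x \<in> closure S" using closure_subset by blast
  have "- x \<notin> interior S"
  proof
    assume "- x \<in> interior S"
    then obtain e where e: "e > 0" "cball (- x) e \<subseteq> S" unfolding mem_interior_cball by blast
    have "cball x e \<subseteq> S"
    proof
      fix y assume "y \<in> cball x e"
      then have "- y \<in> cball (- x) e" by (simp add: dist_norm norm_minus_commute)
      then have "- y \<in> S" using e by blast
      then show "y \<in> S" using symm by fastforce
    qed
    then have "x \<in> interior S" unfolding mem_interior_cball using e by blast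
    then show False using assms(2) frontier_inter_interior by blast
  qed
  then show ?thesis using c unfolding frontier_def by blast
qed

lemma tpoint_frontier: "body S \<Longrightarrow> tpoint S \<theta> \<in> frontier S"
  by (rule tpoint_char) auto

lemma tpoint_in: "body S \<Longrightarrow> tpoint S \<theta> \<in> S"
  using tpoint_frontier frontier_sub by blast

lemma tpoint_nz: "body S \<Longrightarrow> tpoint S \<theta> \<noteq> 0"
  using tpoint_frontier frontier_nz by blast

lemma md_decomp: assumes "body S" shows "\<theta> = md S \<theta> + 2 * piS S * of_int \<lfloor>\<theta> / (2 * piS S)\<rfloor>"
  unfolding md_def by simp

lemma md_bounds: assumes "body S" shows "0 \<le> md S \<theta>" "md S \<theta> < 2 * piS S"
  unfolding md_def using md_range[OF piS_pos[OF assms]] by auto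

lemma md_eq2: assumes "body S" "0 \<le> s" "s < 2 * piS S" "\<theta> = s + 2 * piS S * of_int k"
  shows "md S \<theta> = s"
  unfolding md_def using md_eq[OF piS_pos[OF assms(1)] assms(2-4)] .

lemma tpoint_antipode:
  assumes "body S" shows "tpoint S (\<theta> + piS S) = - tpoint S \<theta>"
proof -
  define P where "P = piS S"
  have P: "P > 0" using piS_pos[OF assms] P_def by simp
  obtain \<alpha> r where a: "0 \<le> \<alpha>" "\<alpha> < 2*pi" "r > 0" "tpoint S \<theta> = (r * cos \<alpha>, r * sin \<alpha>)"
    "tpoint S \<theta> \<in> frontier S" "2 * FS S \<alpha> = md S \<theta>"
    using tpoint_char[OF assms] by blast
  define k where "k = \<lfloor>\<theta> / (2 * piS S)\<rfloor>"
  have th: "\<theta> = md S \<theta> + 2 * P * of_int k" unfolding k_def P_def md_def by simp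
  have fpi: "FS S pi = P / 2" using FS_pi[OF assms] P_def by simp
  have fr: "- tpoint S \<theta> \<in> frontier S" using frontier_neg[OF assms a(5)] .
  show ?thesis
  proof (cases "\<alpha> < pi")
    case True
    have "FS S \<alpha> < FS S pi" using FS_strict[OF assms a(1) True] by simp
    then have m: "md S \<theta> < P" using a(6) fpi by simp
    have h: "FS S (\<alpha> + pi) = FS S \<alpha> + FS S pi" using FS_half[OF assms a(1)] True by simp
    have md2: "md S (\<theta> + piS S) = md S \<theta> + P"
      by (rule md_eq2[OF assms, of _ _ k]) (use m md_bounds[OF assms, of \<theta>] th P_def in auto)
    show ?thesis
    proof (rule tpoint_eqI[OF assms])
      show "tpred S (\<theta> + piS S) (- tpoint S \<theta>)"
        unfolding tpred_def
      proof (intro conjI bexI[of _ "\<alpha> + pi"] exI[of _ r])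
        show "- tpoint S \<theta> \<in> frontier S" by (rule fr)
        show "\<alpha> + pi \<in> {0..<2*pi}" using a True by auto
        show "0 < r" by (rule a(3))
        show "- tpoint S \<theta> = (r * cos (\<alpha> + pi), r * sin (\<alpha> + pi))" using a(4) by simp
        have "2 * FS S (\<alpha> + pi) = md S (\<theta> + piS S)" using md2 h a(6) fpi by simp
        then show "2 * measure lebesgue (sector S (\<alpha> + pi)) = \<theta> + piS S - 2 * piS S * of_int \<lfloor>(\<theta> + piS S) / (2 * piS S)\<rfloor>"
          unfolding FS_def md_def .
      qed
    qed
  next
    case False
    have h: "FS S (\<alpha> - pi + pi) = FS S (\<alpha> - pi) + FS S pi" using False a(2) by (intro FS_half[OF assms]) auto
    then have h2: "2 * FS S (\<alpha> - pi) = md S \<theta> - P" using a(6) fpi by simp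
    have "0 \<le> md S \<theta> - P" using h2 FS_mono[OF assms, of 0 "\<alpha> - pi"] FS_zero[of S] False by simp
    have md2: "md S (\<theta> + piS S) = md S \<theta> - P"
      by (rule md_eq2[OF assms, of _ _ "k + 1"]) (use \<open>0 \<le> md S \<theta> - P\<close> md_bounds[OF assms, of \<theta>] th P_def in \<open>auto simp: algebra_simps\<close>)
    show ?thesis
    proof (rule tpoint_eqI[OF assms])
      show "tpred S (\<theta> + piS S) (- tpoint S \<theta>)"
        unfolding tpred_def
      proof (intro conjI bexI[of _ "\<alpha> - pi"] exI[of _ r])
        show "- tpoint S \<theta> \<in> frontier S" by (rule fr)
        show "\<alpha> - pi \<in> {0..<2*pi}" using a False by auto
        show "0 < r" by (rule a(3))
        show "- tpoint S \<theta> = (r * cos (\<alpha> - pi), r * sin (\<alpha> - pi))" using a(4) by simp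
        have "2 * FS S (\<alpha> - pi) = md S (\<theta> + piS S)" using md2 h2 by simp
        then show "2 * measure lebesgue (sector S (\<alpha> - pi)) = \<theta> + piS S - 2 * piS S * of_int \<lfloor>(\<theta> + piS S) / (2 * piS S)\<rfloor>"
          unfolding FS_def md_def .
      qed
    qed
  qed
qed

lemma cross_polar: "cross (r1 * cos a1, r1 * sin a1) (r2 * cos a2, r2 * sin a2) = r1 * r2 * sin (a2 - a1)"
  unfolding cross_def by (simp add: sin_diff algebra_simps)

lemma tpoint_orient:
  assumes "body S" "0 < d" "d < piS S"
  shows "cross (tpoint S \<theta>) (tpoint S (\<theta> + d)) > 0"
proof -
  define P where "P = piS S"
  have P: "P > 0" using piS_pos[OF assms(1)] P_def by simp
  obtain \<alpha>1 r1 where a1: "0 \<le> \<alpha>1" "\<alpha>1 < 2*pi" "r1 > 0" "tpoint S \<theta> = (r1 * cos \<alpha>1, r1 * sin \<alpha>1)"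
    "2 * FS S \<alpha>1 = md S \<theta>"
    using tpoint_char[OF assms(1)] by metis
  obtain \<alpha>2 r2 where a2: "0 \<le> \<alpha>2" "\<alpha>2 < 2*pi" "r2 > 0" "tpoint S (\<theta>+d) = (r2 * cos \<alpha>2, r2 * sin \<alpha>2)"
    "2 * FS S \<alpha>2 = md S (\<theta>+d)"
    using tpoint_char[OF assms(1)] by metis
  define k where "k = \<lfloor>\<theta> / (2 * piS S)\<rfloor>"
  have th: "\<theta> = md S \<theta> + 2 * P * of_int k" unfolding k_def P_def md_def by simp
  have fpi: "FS S pi = P / 2" using FS_pi[OF assms(1)] P_def by simp
  have mb: "0 \<le> md S \<theta>" "md S \<theta> < 2 * P" using md_bounds[OF assms(1)] P_def by auto
  have "sin (\<alpha>2 - \<alpha>1) > 0"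
  proof (cases "md S \<theta> + d < 2 * P")
    case True
    have md2: "md S (\<theta> + d) = md S \<theta> + d"
      by (rule md_eq2[OF assms(1), of _ _ k]) (use True mb th P_def assms in auto)
    have "\<alpha>1 < \<alpha>2"
    proof (rule ccontr)
      assume "\<not> \<alpha>1 < \<alpha>2"
      then have "FS S \<alpha>2 \<le> FS S \<alpha>1" using FS_mono[OF assms(1)] by simp
      then show False using a1(5) a2(5) md2 assms by simp
    qed
    moreover have "\<alpha>2 - \<alpha>1 < pi"
    proof (rule ccontr)
      assume "\<not> \<alpha>2 - \<alpha>1 < pi"
      then have "\<alpha>1 + pi \<le> \<alpha>2" by simp
      then have "FS S (\<alpha>1 + pi) \<le> FS S \<alpha>2" using FS_mono[OF assms(1)] by simp
      moreover have "\<alpha>1 \<le> pi" using \<open>\<alpha>1 + pi \<le> \<alpha>2\<close> a2 by simp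
      then have "FS S (\<alpha>1 + pi) = FS S \<alpha>1 + P/2" using FS_half[OF assms(1) a1(1)] fpi by simp
      ultimately show False using a1(5) a2(5) md2 assms P_def by simp
    qed
    ultimately show ?thesis by (intro sin_gt_zero) auto
  next
    case False
    have md2: "md S (\<theta> + d) = md S \<theta> + d - 2 * P"
      by (rule md_eq2[OF assms(1), of _ _ "k+1"]) (use False mb th P_def assms in \<open>auto simp: algebra_simps\<close>)
    have "\<alpha>2 < \<alpha>1"
    proof (rule ccontr)
      assume "\<not> \<alpha>2 < \<alpha>1"
      then have "FS S \<alpha>1 \<le> FS S \<alpha>2" using FS_mono[OF assms(1)] by simp
      then show False using a1(5) a2(5) md2 assms P_def by simp
    qed
    have "pi < \<alpha>1 - \<alpha>2"
    proof (rule ccontr)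
      assume c: "\<not> pi < \<alpha>1 - \<alpha>2"
      show False
      proof (cases "pi \<le> \<alpha>1")
        case True
        have "\<alpha>1 - pi \<le> \<alpha>2" using c by simp
        then have "FS S (\<alpha>1 - pi) \<le> FS S \<alpha>2" using FS_mono[OF assms(1)] by simp
        moreover have "FS S (\<alpha>1 - pi + pi) = FS S (\<alpha>1 - pi) + FS S pi"
          using FS_half[OF assms(1), of "\<alpha>1 - pi"] True a1(2) by simp
        ultimately show False using a1(5) a2(5) md2 assms fpi P_def by simp
      next
        case False
        then have "FS S \<alpha>1 < FS S pi" using FS_strict[OF assms(1) a1(1)] by simp
        then show False using a1(5) fpi \<open>\<not> (md S \<theta> + d < 2 * P)\<close> assms P_def by simp
      qed
    qed
    then have "sin (\<alpha>2 - \<alpha>1 + 2*pi) > 0" using a1 a2 by (intro sin_gt_zero) auto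
    then show ?thesis by (simp add: sin_add)
  qed
  then show ?thesis using a1(3,4) a2(3,4) cross_polar by simp
qed

context
  fixes N :: "real \<times> real \<Rightarrow> real"
  assumes N: "is_norm N"
begin

lemma N_nonneg: "0 \<le> N x" using N unfolding is_norm_def by blast
lemma N_zero_iff: "N x = 0 \<longleftrightarrow> x = 0" using N unfolding is_norm_def by blast
lemma N_scale: "N (c *\<^sub>R x) = \<bar>c\<bar> * N x" using N unfolding is_norm_def by blast
lemma N_tri: "N (x + y) \<le> N x + N y" using N unfolding is_norm_def by blast

lemma N_0: "N 0 = 0" using N_zero_iff by simp
lemma N_neg: "N (- x) = N x" using N_scale[of "-1" x] by simp

lemma N_diff: "\<bar>N x - N y\<bar> \<le> N (x - y)"
proof -
  have "N x \<le> N (x - y) + N y" using N_tri[of "x - y" y] by simp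
  moreover have "N y \<le> N (y - x) + N x" using N_tri[of "y - x" x] by simp
  moreover have "N (y - x) = N (x - y)" using N_neg[of "x - y"] by simp
  ultimately show ?thesis by linarith
qed

lemma N_upper: obtains K where "K > 0" "\<And>x. N x \<le> K * norm x"
proof -
  define K where "K = N (1,0) + N (0,1) + 1"
  have K: "K > 0" unfolding K_def using N_nonneg[of "(1,0)"] N_nonneg[of "(0,1)"] by simp
  have "N x \<le> K * norm x" for x
  proof -
    obtain a b where x: "x = (a,b)" by (cases x)
    have "x = a *\<^sub>R (1,0) + b *\<^sub>R (0,1)" using x by simp
    then have "N x \<le> \<bar>a\<bar> * N (1,0) + \<bar>b\<bar> * N (0,1)" using N_tri N_scale by metis
    also have "\<dots> \<le> norm x * N (1,0) + norm x * N (0,1)"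
    proof (intro add_mono mult_right_mono N_nonneg)
      show "\<bar>a\<bar> \<le> norm x" using norm_fst_le[of a b] x by simp
      show "\<bar>b\<bar> \<le> norm x" using norm_snd_le[of b a] x by simp
    qed
    also have "\<dots> \<le> K * norm x" unfolding K_def by (simp add: algebra_simps)
    finally show ?thesis .
  qed
  then show ?thesis using that K by blast
qed

lemma N_cont: "continuous_on UNIV N"
proof -
  obtain K where K: "K > 0" "\<And>x. N x \<le> K * norm x" using N_upper by blast
  show ?thesis unfolding continuous_on_iff
  proof (intro ballI allI impI)
    fix x e :: real assume e: "0 < e"
    fix x :: "real \<times> real"
    show "\<exists>d>0. \<forall>x'\<in>UNIV. dist x' x < d \<longrightarrow> dist (N x') (N x) < e"
    proof (intro exI[of _ "e / K"] conjI ballI impI)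
      show "0 < e / K" using e K by simp
      fix x' assume "dist x' x < e / K"
      then have "K * norm (x' - x) < e" using K by (simp add: dist_norm field_simps)
      then show "dist (N x') (N x) < e" using N_diff[of x' x] K(2)[of "x' - x"]
        by (simp add: dist_real_def)
    qed
  qed
qed

lemma N_lower: obtains c where "c > 0" "\<And>x. c * norm x \<le> N x"
proof -
  have "\<exists>m\<in>sphere 0 1. \<forall>y\<in>sphere 0 1. N m \<le> N y"
  proof (rule continuous_attains_inf)
    show "compact (sphere (0::real\<times>real) 1)" by simp
    have "(1::real, 0::real) \<in> sphere 0 1" by (simp add: norm_prod_def)
    then show "sphere (0::real\<times>real) 1 \<noteq> {}" by blast
    show "continuous_on (sphere 0 1) N" by (rule continuous_on_subset[OF N_cont]) simp
  qed
  then obtain m where m: "norm m = 1" "\<And>y. norm y = 1 \<Longrightarrow> N m \<le> N y" by auto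
  have c: "N m > 0" using m(1) N_zero_iff N_nonneg[of m] by (metis less_eq_real_def norm_zero zero_neq_one)
  have "N m * norm x \<le> N x" for x
  proof (cases "x = 0")
    case True then show ?thesis by (simp add: N_0)
  next
    case False
    have "N m \<le> N (inverse (norm x) *\<^sub>R x)" using m(2) False by simp
    also have "\<dots> = inverse (norm x) * N x" using N_scale by simp
    finally show ?thesis using False by (simp add: field_simps)
  qed
  then show ?thesis using that c by blast
qed

lemma Omega_closed: "closed (Omega N)"
  unfolding Omega_def by (rule closed_Collect_le[OF N_cont continuous_on_const, simplified])

lemma N_lt1_interior: "N x < 1 \<Longrightarrow> x \<in> interior (Omega N)"
proof -
  assume "N x < 1"
  have "open {x. N x < 1}" by (rule open_Collect_less[OF N_cont continuous_on_const, simplified])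
  moreover have "{x. N x < 1} \<subseteq> Omega N" unfolding Omega_def by auto
  ultimately show ?thesis using \<open>N x < 1\<close> interior_maximal by blast
qed

lemma Omega_body: "body (Omega N)"
proof -
  obtain c where c: "c > 0" "\<And>x. c * norm x \<le> N x" using N_lower by blast
  have bd: "bounded (Omega N)" unfolding bounded_iff Omega_def
  proof (intro exI[of _ "1/c"] ballI)
    fix x assume "x \<in> {x. N x \<le> 1}"
    then have "c * norm x \<le> 1" using c(2)[of x] by simp
    then show "norm x \<le> 1/c" using c by (simp add: field_simps)
  qed
  have cv: "convex (Omega N)" unfolding convex_def Omega_def
  proof (intro ballI allI impI)
    fix x y :: "real\<times>real" and u v :: real
    assume h: "x \<in> {x. N x \<le> 1}" "y \<in> {x. N x \<le> 1}" "0 \<le> u" "0 \<le> v" "u + v = 1"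
    have "N (u *\<^sub>R x + v *\<^sub>R y) \<le> u * N x + v * N y" using N_tri N_scale h by (metis abs_of_nonneg)
    also have "\<dots> \<le> u * 1 + v * 1" using h by (intro add_mono mult_left_mono) auto
    finally show "u *\<^sub>R x + v *\<^sub>R y \<in> {x. N x \<le> 1}" using h by simp
  qed
  have sy: "\<forall>x\<in>Omega N. - x \<in> Omega N" unfolding Omega_def by (simp add: N_neg)
  have "0 \<in> interior (Omega N)" using N_lt1_interior N_0 by simp
  then show ?thesis unfolding body_def using bd cv sy Omega_closed compact_eq_bounded_closed by blast
qed

lemma frontier_Omega: "x \<in> frontier (Omega N) \<Longrightarrow> N x = 1"
proof -
  assume x: "x \<in> frontier (Omega N)"
  then have "x \<in> Omega N" using frontier_sub[OF Omega_body] by blast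
  moreover have "\<not> N x < 1" using x N_lt1_interior frontier_inter_interior by blast
  ultimately show ?thesis unfolding Omega_def by simp
qed

lemma pairing_inner: "pairing p x = inner p x"
  by (simp add: pairing_def inner_prod_def)

lemma polar_le_N: assumes "p \<in> polar (Omega N)" shows "pairing p x \<le> N x"
proof (cases "x = 0")
  case True then show ?thesis by (simp add: pairing_def N_0)
next
  case False
  then have Np: "N x > 0" using N_nonneg[of x] N_zero_iff[of x] by simp
  have "inverse (N x) *\<^sub>R x \<in> Omega N" unfolding Omega_def using N_scale Np by simp
  then have "pairing p (inverse (N x) *\<^sub>R x) \<le> 1" using assms unfolding polar_def by blast
  then have "inverse (N x) * pairing p x \<le> 1" by (simp add: pairing_def algebra_simps)
  then show ?thesis using Np by (simp add: field_simps)
qed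

lemma polar_body: "body (polar (Omega N))"
proof -
  obtain c where c: "c > 0" "\<And>x. c * norm x \<le> N x" using N_lower by blast
  obtain K where K: "K > 0" "\<And>x. N x \<le> K * norm x" using N_upper by blast
  have cl: "closed (polar (Omega N))"
  proof -
    have "polar (Omega N) = (\<Inter>x\<in>Omega N. {p. inner x p \<le> 1})"
      unfolding polar_def by (auto simp: pairing_def inner_prod_def mult.commute) fastforce
    then show ?thesis by (simp add: closed_INT closed_halfspace_le)
  qed
  have bd: "bounded (polar (Omega N))" unfolding bounded_iff
  proof (intro exI[of _ K] ballI)
    fix p assume p: "p \<in> polar (Omega N)"
    have "pairing p p \<le> N p" using polar_le_N[OF p] .
    then have "norm p ^ 2 \<le> K * norm p" using K(2)[of p] by (simp add: pairing_inner power2_norm_eq_inner)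
    then show "norm p \<le> K" using K by (cases "norm p = 0") (auto simp: power2_eq_square)
  qed
  have cv: "convex (polar (Omega N))" unfolding convex_def polar_def
  proof (intro ballI allI impI CollectI)
    fix p q :: "real\<times>real" and u v :: real and x
    assume h: "p \<in> {p. \<forall>x\<in>Omega N. pairing p x \<le> 1}" "q \<in> {p. \<forall>x\<in>Omega N. pairing p x \<le> 1}"
      "0 \<le> u" "0 \<le> v" "u + v = 1" and x: "x \<in> Omega N"
    have "pairing (u *\<^sub>R p + v *\<^sub>R q) x = u * pairing p x + v * pairing q x"
      by (simp add: pairing_def algebra_simps)
    also have "\<dots> \<le> u * 1 + v * 1" using h x by (intro add_mono mult_left_mono) auto
    finally show "pairing (u *\<^sub>R p + v *\<^sub>R q) x \<le> 1" using h by simp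
  qed
  have sy: "\<forall>p\<in>polar (Omega N). - p \<in> polar (Omega N)"
  proof
    fix p assume p: "p \<in> polar (Omega N)"
    show "- p \<in> polar (Omega N)" unfolding polar_def
    proof (intro CollectI ballI)
      fix x assume "x \<in> Omega N"
      then have "- x \<in> Omega N" unfolding Omega_def by (simp add: N_neg)
      then have "pairing p (- x) \<le> 1" using p unfolding polar_def by blast
      then show "pairing (- p) x \<le> 1" by (simp add: pairing_def)
    qed
  qed
  have "ball 0 c \<subseteq> polar (Omega N)"
  proof
    fix p :: "real\<times>real" assume "p \<in> ball 0 c"
    then have np: "norm p < c" by simp
    show "p \<in> polar (Omega N)" unfolding polar_def
    proof (intro CollectI ballI)
      fix x assume "x \<in> Omega N"
      then have "c * norm x \<le> 1" using c(2)[of x] unfolding Omega_def by simp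
      have "pairing p x \<le> norm p * norm x" unfolding pairing_inner by (rule norm_cauchy_schwarz)
      also have "\<dots> \<le> c * norm x" using np by (intro mult_right_mono) auto
      finally show "pairing p x \<le> 1" using \<open>c * norm x \<le> 1\<close> by simp
    qed
  qed
  then have "0 \<in> interior (polar (Omega N))" using c(1) interior_maximal[OF _ open_ball] by (meson centre_in_ball subsetD)
  then show ?thesis unfolding body_def using bd cv sy cl compact_eq_bounded_closed by blast
qed

end

lemma seg_lemma:
  assumes N: "is_norm N" and pp: "pp \<in> polar (Omega N)"
    and ab: "\<theta>a < \<theta>b" "\<theta>b < \<theta>a + piS (Omega N)"
    and ea: "pairing pp (tpoint (Omega N) \<theta>a) = 1" and eb: "pairing pp (tpoint (Omega N) \<theta>b) = 1"
    and t: "\<theta>a \<le> t" "t \<le> \<theta>b"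
  shows "pairing pp (tpoint (Omega N) t) = 1"
proof -
  let ?O = "Omega N"
  have bO: "body ?O" using Omega_body[OF N] .
  consider "t = \<theta>a" | "t = \<theta>b" | "\<theta>a < t \<and> t < \<theta>b" using t by linarith
  then show ?thesis
  proof cases
    case 1 then show ?thesis using ea by simp
  next
    case 2 then show ?thesis using eb by simp
  next
    case 3
    define c1 where "c1 = tpoint ?O \<theta>a"
    define c2 where "c2 = tpoint ?O \<theta>b"
    define x where "x = tpoint ?O t"
    have D: "cross c1 c2 > 0" using tpoint_orient[OF bO, of "\<theta>b - \<theta>a" \<theta>a] ab unfolding c1_def c2_def by simp
    have D1: "cross c1 x > 0" using tpoint_orient[OF bO, of "t - \<theta>a" \<theta>a] ab 3 unfolding c1_def x_def by simp
    have D2: "cross x c2 > 0" using tpoint_orient[OF bO, of "\<theta>b - t" t] ab 3 unfolding c2_def x_def by simp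
    define \<mu> where "\<mu> = cross x c2 / cross c1 c2"
    define \<nu> where "\<nu> = cross c1 x / cross c1 c2"
    have mu: "\<mu> > 0" "\<nu> > 0" unfolding \<mu>_def \<nu>_def using D D1 D2 by auto
    have id: "cross c1 c2 *\<^sub>R x = cross x c2 *\<^sub>R c1 + cross c1 x *\<^sub>R c2"
      by (simp add: prod_eq_iff cross_def algebra_simps)
    have "\<mu> *\<^sub>R c1 + \<nu> *\<^sub>R c2 = inverse (cross c1 c2) *\<^sub>R (cross x c2 *\<^sub>R c1 + cross c1 x *\<^sub>R c2)"
      unfolding \<mu>_def \<nu>_def by (simp add: scaleR_add_right divide_inverse mult.commute)
    also have "\<dots> = x" unfolding id[symmetric] using D by simp
    finally have xe: "x = \<mu> *\<^sub>R c1 + \<nu> *\<^sub>R c2" by simp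
    have Nc: "N c1 = 1" "N c2 = 1" "N x = 1"
      unfolding c1_def c2_def x_def using frontier_Omega[OF N] tpoint_frontier[OF bO] by auto
    have "N x \<le> \<mu> * N c1 + \<nu> * N c2" using xe N_tri[OF N] N_scale[OF N] mu
      by (metis abs_of_pos)
    then have s1: "1 \<le> \<mu> + \<nu>" using Nc by simp
    have "pairing pp x = \<mu> * pairing pp c1 + \<nu> * pairing pp c2" using xe
      by (simp add: pairing_def algebra_simps)
    then have px: "pairing pp x = \<mu> + \<nu>" using ea eb unfolding c1_def c2_def by simp
    have "pairing pp x \<le> 1" using polar_le_N[OF N pp, of x] Nc by simp
    then show ?thesis using px s1 unfolding x_def by simp
  qed
qed

lemma corresp_iff: "corresp N \<theta> \<phi> \<longleftrightarrow> pairing (tpoint (polar (Omega N)) \<phi>) (tpoint (Omega N) \<theta>) = 1"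
  unfolding corresp_def cosT_def sinT_def pairing_def by (simp add: mult.commute)

lemma pairing_neg: "pairing (- p) x = - pairing p x" "pairing p (- x) = - pairing p x"
  by (simp_all add: pairing_def)

lemma D0_single: "\<phi> \<in> D0 C \<Longrightarrow> C \<phi> = {phio C \<phi>}"
  unfolding D0_def phio_def by (auto intro: the_equality[symmetric] theI)

lemma smooth_unique:
  assumes N: "is_norm N" and C1: "C1_norm N" and a: "a \<in> frontier (Omega N)"
    and p1: "p1 \<in> polar (Omega N)" "pairing p1 a = 1"
    and p2: "p2 \<in> polar (Omega N)" "pairing p2 a = 1"
  shows "p1 = p2"
proof -
  have bO: "body (Omega N)" using Omega_body[OF N] .
  have "a \<noteq> 0" using frontier_nz[OF bO a] .
  obtain N' :: "real \<times> real \<Rightarrow> ((real \<times> real) \<Rightarrow>\<^sub>L real)"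
    where d: "\<And>x. x \<noteq> 0 \<Longrightarrow> (N has_derivative blinfun_apply (N' x)) (at x)"
    using C1 unfolding C1_norm_def by blast
  have Na: "N a = 1" using frontier_Omega[OF N a] .
  have key: "\<And>h. blinfun_apply (N' a) h = pairing pp h"
    if pp: "pp \<in> polar (Omega N)" "pairing pp a = 1" for pp
  proof -
    have lin: "bounded_linear (pairing pp)" proof -
      have "pairing pp = inner pp" by (auto simp: pairing_def inner_prod_def fun_eq_iff)
      then show ?thesis by (simp add: bounded_linear_inner_right)
    qed
    have "((\<lambda>x. N x - pairing pp x) has_derivative (\<lambda>h. blinfun_apply (N' a) h - pairing pp h)) (at a)"
      by (intro has_derivative_diff d[OF \<open>a \<noteq> 0\<close>] bounded_linear_imp_has_derivative lin)
    moreover have "eventually (\<lambda>y. N a - pairing pp a \<le> N y - pairing pp y) (at a)"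
      using polar_le_N[OF N pp(1)] Na pp(2) by (intro always_eventually) auto
    ultimately have "(\<lambda>h. blinfun_apply (N' a) h - pairing pp h) = (\<lambda>h. 0)"
      by (rule has_derivative_local_min)
    then show "\<And>h. blinfun_apply (N' a) h = pairing pp h" by (metis eq_iff_diff_eq_0)
  qed
  have "pairing p1 h = pairing p2 h" for h using key[OF p1] key[OF p2] by simp
  from this[of "(1,0)"] this[of "(0,1)"] show ?thesis by (simp add: pairing_def prod_eq_iff)
qed

context
  fixes N :: "real \<times> real \<Rightarrow> real" and C :: "real \<Rightarrow> real set"
  assumes N: "is_norm N" and Cl: "is_Clow N C"
begin

abbreviation "Om \<equiv> Omega N"
abbreviation "Po \<equiv> polar (Omega N)"
abbreviation "PO \<equiv> piS (Omega N)"
abbreviation "PP \<equiv> piS (polar (Omega N))"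

lemma bO: "body Om" using Omega_body[OF N] .
lemma bP: "body Po" using polar_body[OF N] .
lemma PO_pos: "PO > 0" using piS_pos[OF bO] .
lemma PP_pos: "PP > 0" using piS_pos[OF bP] .

lemma C_int: "\<exists>a b. a \<le> b \<and> C \<phi> = {a..b}" using Cl unfolding is_Clow_def by blast
lemma C_ne: obtains t where "t \<in> C \<phi>" using C_int[of \<phi>] by fastforce
lemma C_corr: "t \<in> C \<phi> \<Longrightarrow> pairing (tpoint Po \<phi>) (tpoint Om t) = 1"
  using Cl unfolding is_Clow_def corresp_iff by blast
lemma C_max: "is_interval J \<Longrightarrow> C \<phi> \<subseteq> J \<Longrightarrow> (\<And>t. t \<in> J \<Longrightarrow> pairing (tpoint Po \<phi>) (tpoint Om t) = 1) \<Longrightarrow> J = C \<phi>"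
  using Cl unfolding is_Clow_def corresp_iff by blast
lemma C_mono: "\<phi>1 < \<phi>2 \<Longrightarrow> t1 \<in> C \<phi>1 \<Longrightarrow> t2 \<in> C \<phi>2 \<Longrightarrow> t1 \<le> t2"
  using Cl unfolding is_Clow_def by blast
lemma C_per: "C (\<phi> + 2 * of_int k * PP) = (\<lambda>\<theta>. \<theta> + 2 * of_int k * PO) ` C \<phi>"
  using Cl unfolding is_Clow_def by blast

lemma C_plus: "C (\<phi> + 2 * PP) = (\<lambda>\<theta>. \<theta> + 2 * PO) ` C \<phi>"
  using C_per[of \<phi> 1] by simp
lemma C_minus: "C (\<phi> - 2 * PP) = (\<lambda>\<theta>. \<theta> - 2 * PO) ` C \<phi>"
  using C_per[of \<phi> "-1"] by simp

lemma half_turn: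
  assumes "C \<phi> = {\<theta>1}" "\<theta>3 \<in> C (\<phi> + PP)"
  shows "\<theta>3 = \<theta>1 + PO"
proof -
  have "\<theta>1 \<le> \<theta>3" using C_mono[of \<phi> "\<phi> + PP" \<theta>1 \<theta>3] assms PP_pos by simp
  have "\<theta>3 \<le> \<theta>1 + 2 * PO"
    using C_mono[of "\<phi> + PP" "\<phi> + 2 * PP" \<theta>3 "\<theta>1 + 2 * PO"] assms PP_pos C_plus[of \<phi>] by simp
  define \<theta> where "\<theta> = \<theta>3 - PO"
  define p where "p = tpoint Po \<phi>"
  define a where "a = tpoint Om \<theta>1"
  have pa: "pairing p a = 1" using C_corr[of \<theta>1 \<phi>] assms unfolding p_def a_def by simp
  have p_in: "p \<in> Po" unfolding p_def using tpoint_in[OF bP] .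
  have "pairing (tpoint Po (\<phi> + PP)) (tpoint Om (\<theta> + PO)) = 1"
    using C_corr[OF assms(2)] unfolding \<theta>_def by simp
  then have pt: "pairing p (tpoint Om \<theta>) = 1"
    unfolding p_def tpoint_antipode[OF bP] tpoint_antipode[OF bO] by (simp add: pairing_def)
  show ?thesis
  proof (rule ccontr)
    assume ne: "\<theta>3 \<noteq> \<theta>1 + PO"
    then have ne': "\<theta> \<noteq> \<theta>1" unfolding \<theta>_def by simp
    consider "\<theta>1 < \<theta>" | "\<theta> < \<theta>1" using ne' by linarith
    then show False
    proof cases
      case 1
      have "\<theta> \<noteq> \<theta>1 + PO"
      proof
        assume "\<theta> = \<theta>1 + PO"
        then have "tpoint Om \<theta> = - a" unfolding a_def using tpoint_antipode[OF bO] by simp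
        then show False using pt pa by (simp add: pairing_def)
      qed
      then have lt: "\<theta> < \<theta>1 + PO" using \<open>\<theta>3 \<le> \<theta>1 + 2 * PO\<close> unfolding \<theta>_def by simp
      have "{\<theta>1..\<theta>} = C \<phi>"
      proof (rule C_max)
        show "is_interval {\<theta>1..\<theta>}" by (rule is_interval_cc)
        show "C \<phi> \<subseteq> {\<theta>1..\<theta>}" using assms 1 by simp
        fix t assume "t \<in> {\<theta>1..\<theta>}"
        then show "pairing (tpoint Po \<phi>) (tpoint Om t) = 1"
          using seg_lemma[OF N p_in 1 lt, of t] pa pt unfolding a_def p_def by auto
      qed
      then show False using assms 1 by (metis atLeastAtMost_singleton_iff less_irrefl)
    next
      case 2
      have "\<theta> \<noteq> \<theta>1 - PO"
      proof
        assume "\<theta> = \<theta>1 - PO"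
        then have "a = - tpoint Om \<theta>" unfolding a_def using tpoint_antipode[OF bO, of \<theta>] by simp
        then show False using pt pa by (simp add: pairing_def)
      qed
      then have lt: "\<theta>1 < \<theta> + PO" using \<open>\<theta>1 \<le> \<theta>3\<close> unfolding \<theta>_def by simp
      have "{\<theta>..\<theta>1} = C \<phi>"
      proof (rule C_max)
        show "is_interval {\<theta>..\<theta>1}" by (rule is_interval_cc)
        show "C \<phi> \<subseteq> {\<theta>..\<theta>1}" using assms 2 by simp
        fix t assume "t \<in> {\<theta>..\<theta>1}"
        then show "pairing (tpoint Po \<phi>) (tpoint Om t) = 1"
          using seg_lemma[OF N p_in 2 lt, of t] pa pt unfolding a_def p_def by auto
      qed
      then show False using assms 2 by (metis atLeastAtMost_singleton_iff less_irrefl)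
    qed
  qed
qed

lemma Ibound:
  assumes "C \<phi> = {\<theta>1}" "\<theta>1 \<in> C \<phi>'"
  shows "\<phi> - 2 * PP < \<phi>'"
proof (rule ccontr)
  assume "\<not> \<phi> - 2 * PP < \<phi>'"
  then consider "\<phi>' < \<phi> - 2 * PP" | "\<phi>' = \<phi> - 2 * PP" by linarith
  then show False
  proof cases
    case 1
    have "\<theta>1 - 2 * PO \<in> C (\<phi> - 2 * PP)" using C_minus[of \<phi>] assms by simp
    then have "\<theta>1 \<le> \<theta>1 - 2 * PO" using C_mono[OF 1 assms(2)] by blast
    then show False using PO_pos by simp
  next
    case 2
    then have "\<theta>1 = \<theta>1 - 2 * PO" using C_minus[of \<phi>] assms by auto
    then show False using PO_pos by simp
  qed
qed

lemma JR_expr: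
  assumes "C \<phi> = {\<theta>1}" "C (\<phi> + \<psi>) = {\<theta>2}"
  shows "JR N C \<phi> \<psi> = 2 - pairing (tpoint Po (\<phi> + \<psi>)) (tpoint Om \<theta>1)
            - pairing (tpoint Po \<phi>) (tpoint Om \<theta>2) - \<psi> * cross (tpoint Om \<theta>1) (tpoint Om \<theta>2)"
proof -
  have "phio C \<phi> = \<theta>1" "phio C (\<phi> + \<psi>) = \<theta>2" unfolding phio_def using assms by auto
  then show ?thesis unfolding JR_def Let_def cosT_def sinT_def pairing_def cross_def
    by (simp add: algebra_simps)
qed

lemma part1:
  assumes "\<phi> \<in> D0 C" "\<phi> + \<psi> \<in> D0 C" "PP < \<psi>" "\<psi> < 2 * PP - delta_minus C \<phi>"
  shows "JR N C \<phi> \<psi> > 0"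
proof -
  define \<theta>1 where "\<theta>1 = phio C \<phi>"
  define \<theta>2 where "\<theta>2 = phio C (\<phi> + \<psi>)"
  have c1: "C \<phi> = {\<theta>1}" unfolding \<theta>1_def using D0_single[OF assms(1)] .
  have c2: "C (\<phi> + \<psi>) = {\<theta>2}" unfolding \<theta>2_def using D0_single[OF assms(2)] .
  obtain \<theta>3 where t3: "\<theta>3 \<in> C (\<phi> + PP)" using C_ne by blast
  have "\<theta>3 = \<theta>1 + PO" using half_turn[OF c1 t3] .
  then have low: "\<theta>1 + PO \<le> \<theta>2" using C_mono[of "\<phi> + PP" "\<phi> + \<psi>" \<theta>3 \<theta>2] t3 c2 assms(3) by simp
  define I where "I = (\<Union>\<theta>\<in>C \<phi>. Cup C \<theta>)"
  have I: "I = {\<phi>'. \<theta>1 \<in> C \<phi>'}" unfolding I_def Cup_def c1 by simp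
  have bdd: "bdd_below I" unfolding I bdd_below_def using Ibound[OF c1] by (metis less_imp_le mem_Collect_eq)
  have "\<phi> \<in> I" unfolding I using c1 by simp
  then have infle: "Inf I \<le> \<phi>" using cInf_lower[OF _ bdd] by blast
  have dm: "delta_minus C \<phi> = \<phi> - Inf I" unfolding delta_minus_def I_def ..
  have "\<phi> + \<psi> - 2 * PP < Inf I" using assms(4) dm by simp
  then have nI: "\<phi> + \<psi> - 2 * PP \<notin> I" using cInf_lower[OF _ bdd] by force
  have cm: "C (\<phi> + \<psi> - 2 * PP) = {\<theta>2 - 2 * PO}" using C_minus[of "\<phi> + \<psi>"] c2 by simp
  have "\<theta>2 - 2 * PO \<noteq> \<theta>1" using nI cm unfolding I by auto
  moreover have "\<theta>2 - 2 * PO \<le> \<theta>1"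
    using C_mono[of "\<phi> + \<psi> - 2 * PP" \<phi> "\<theta>2 - 2 * PO" \<theta>1] cm c1 \<open>\<phi> + \<psi> - 2 * PP < Inf I\<close> infle by simp
  ultimately have up: "\<theta>2 < \<theta>1 + 2 * PO" by simp
  define a where "a = tpoint Om \<theta>1"
  define b where "b = tpoint Om \<theta>2"
  define p where "p = tpoint Po \<phi>"
  define q where "q = tpoint Po (\<phi> + \<psi>)"
  have pa: "pairing p a = 1" using C_corr[of \<theta>1 \<phi>] c1 unfolding p_def a_def by simp
  have qb: "pairing q b = 1" using C_corr[of \<theta>2 "\<phi> + \<psi>"] c2 unfolding q_def b_def by simp
  have J: "JR N C \<phi> \<psi> = 2 - pairing q a - pairing p b - \<psi> * cross a b"
    using JR_expr[OF c1 c2] unfolding a_def b_def p_def q_def .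
  have psi: "\<psi> > 0" using assms(3) PP_pos by simp
  show ?thesis
  proof (cases "\<theta>2 = \<theta>1 + PO")
    case True
    then have "b = - a" unfolding a_def b_def using tpoint_antipode[OF bO] by simp
    then have "JR N C \<phi> \<psi> = 4" using J pa qb by (simp add: pairing_def cross_def algebra_simps)
    then show ?thesis by simp
  next
    case False
    define d where "d = \<theta>2 - PO - \<theta>1"
    have d: "0 < d" "d < PO" using False low up unfolding d_def by auto
    have "cross a (tpoint Om (\<theta>1 + d)) > 0" unfolding a_def by (rule tpoint_orient[OF bO d])
    moreover have "b = - tpoint Om (\<theta>1 + d)"
      unfolding b_def d_def using tpoint_antipode[OF bO, of "\<theta>2 - PO"] by simp
    ultimately have cr: "cross a b < 0" by (simp add: cross_def)
    have "a \<in> Om" unfolding a_def using tpoint_in[OF bO] .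
    moreover have "q \<in> Po" unfolding q_def using tpoint_in[OF bP] .
    ultimately have qa: "pairing q a \<le> 1" unfolding polar_def by blast
    have "b \<in> Om" unfolding b_def using tpoint_in[OF bO] .
    moreover have "p \<in> Po" unfolding p_def using tpoint_in[OF bP] .
    ultimately have pb: "pairing p b \<le> 1" unfolding polar_def by blast
    have "\<psi> * cross a b < 0" using psi cr by (simp add: mult_pos_neg)
    then show ?thesis using J qa pb by simp
  qed
qed

lemma delta0:
  assumes C1: "C1_norm N" and ph: "\<phi> \<in> D0 C"
  shows "delta_minus C \<phi> = 0"
proof -
  define \<theta>1 where "\<theta>1 = phio C \<phi>"
  have c1: "C \<phi> = {\<theta>1}" unfolding \<theta>1_def using D0_single[OF ph] .
  define I where "I = (\<Union>\<theta>\<in>C \<phi>. Cup C \<theta>)"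
  have I: "I = {\<phi>'. \<theta>1 \<in> C \<phi>'}" unfolding I_def Cup_def c1 by simp
  define a where "a = tpoint Om \<theta>1"
  define p where "p = tpoint Po \<phi>"
  have pa: "pairing p a = 1" using C_corr[of \<theta>1 \<phi>] c1 unfolding p_def a_def by simp
  have "Inf I = \<phi>"
  proof (rule cInf_eq_minimum)
    show "\<phi> \<in> I" unfolding I using c1 by simp
    fix \<phi>' assume "\<phi>' \<in> I"
    then have t1: "\<theta>1 \<in> C \<phi>'" unfolding I by simp
    show "\<phi> \<le> \<phi>'"
    proof (rule ccontr)
      assume "\<not> \<phi> \<le> \<phi>'"
      define d where "d = \<phi> - \<phi>'"
      have d: "0 < d" "d < 2 * PP" using Ibound[OF c1 t1] \<open>\<not> \<phi> \<le> \<phi>'\<close> unfolding d_def by auto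
      define p' where "p' = tpoint Po \<phi>'"
      have pa': "pairing p' a = 1" using C_corr[OF t1] unfolding p'_def a_def .
      have "p' = p"
        by (rule smooth_unique[OF N C1 _ _ pa' _ pa])
           (auto simp: a_def p_def p'_def intro: tpoint_frontier[OF bO] tpoint_in[OF bP])
      have pe: "p = tpoint Po (\<phi>' + d)" unfolding p_def d_def by simp
      consider "d < PP" | "d = PP" | "PP < d" by linarith
      then show False
      proof cases
        case 1
        have "cross p' p > 0" unfolding p'_def pe by (rule tpoint_orient[OF bP]) (use d 1 in auto)
        then show False using \<open>p' = p\<close> by (simp add: cross_def)
      next
        case 2
        then have "p = - p'" unfolding pe p'_def using tpoint_antipode[OF bP] by simp
        then have "p = 0" using \<open>p' = p\<close> by (auto simp: prod_eq_iff)
        then show False using tpoint_nz[OF bP] unfolding p_def by simp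
      next
        case 3
        have "cross p' (tpoint Po (\<phi>' + (d - PP))) > 0" unfolding p'_def
          by (rule tpoint_orient[OF bP]) (use d 3 in auto)
        moreover have "p = - tpoint Po (\<phi>' + (d - PP))"
          unfolding pe using tpoint_antipode[OF bP, of "\<phi>' + (d - PP)"] by simp
        ultimately have "cross p' p < 0" by (simp add: cross_def)
        then show False using \<open>p' = p\<close> by (simp add: cross_def)
      qed
    qed
  qed
  then show ?thesis unfolding delta_minus_def I_def[symmetric] by simp
qed

end

theorem proposition3p10:
  fixes N :: "real \<times> real \<Rightarrow> real" and C :: "real \<Rightarrow> real set"
  assumes "is_norm N" and "is_Clow N C"
  shows "(\<forall>\<phi> \<psi>. \<phi> \<in> D0 C \<and> \<phi> + \<psi> \<in> D0 C \<and> piS (polar (Omega N)) < \<psi> \<and>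
              \<psi> < 2 * piS (polar (Omega N)) - delta_minus C \<phi> \<longrightarrow> JR N C \<phi> \<psi> > 0)
       \<and> (C1_norm N \<longrightarrow>
          (\<forall>\<phi> \<psi>. \<phi> \<in> D0 C \<and> \<phi> + \<psi> \<in> D0 C \<and> piS (polar (Omega N)) < \<psi> \<and>
              \<psi> < 2 * piS (polar (Omega N)) \<longrightarrow> JR N C \<phi> \<psi> > 0))"
proof (intro conjI allI impI)
  fix \<phi> \<psi>
  assume h: "\<phi> \<in> D0 C \<and> \<phi> + \<psi> \<in> D0 C \<and> piS (polar (Omega N)) < \<psi> \<and>
              \<psi> < 2 * piS (polar (Omega N)) - delta_minus C \<phi>"
  then show "JR N C \<phi> \<psi> > 0" using part1[OF assms] by blast
next
  fix \<phi> \<psi>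
  assume C1: "C1_norm N" and h: "\<phi> \<in> D0 C \<and> \<phi> + \<psi> \<in> D0 C \<and> piS (polar (Omega N)) < \<psi> \<and>
              \<psi> < 2 * piS (polar (Omega N))"
  have "delta_minus C \<phi> = 0" using delta0[OF assms C1] h by blast
  then show "JR N C \<phi> \<psi> > 0" using part1[OF assms] h by simp
qed

end
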